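(* Let $A\in\mathbb R^{n\times n}$ be symmetric with bandwidth $b$, where $1<b<n$, let $Q\in\mathbb R^{2n\times 2n}$ be the orthogonal matrix produced by Algorithm 2 (described in the context) applied to $A$, and set $Q_1=Q(1{:}n,1{:}n)$, $Q_2=Q(n{+}1{:}2n,1{:}n)$. Then for every $1\le k<n$, both $(Q_1Q_2^{T})(1{:}k,\,k{+}1{:}n)$ and $(Q_1Q_2^{T})(k{+}1{:}n,\,1{:}k)$ have rank at most $2b$.
   Context: A matrix has bandwidth $b$ if its $(i,j)$ entry vanishes whenever $|i-j|>b$. A Givens rotation on rows $p\ne q$ is an orthogonal matrix $G\in\mathbb R^{2n\times 2n}$ equal to the identity except in the entries $(p,p),(p,q),(q,p),(q,q)$, which form a $2\times2$ rotation $\begin{bmatrix}c&s\\-s&c\end{bmatrix}$, $c^2+s^2=1$. "Rotate rows $p,q$ to annihilate $R(q,j)$" means: choose such a $G$ for which $(G^{T}R)(q,j)=0$ and then update $R\leftarrow G^{T}R$, $Q\leftarrow QG$. Algorithm 2: Initialize $Q=I_{2n}$, $R=\begin{bmatrix}A\\ I_n\end{bmatrix}\in\mathbb R^{2n\times n}$. First rotate rows $1,n+1$ to annihilate $R(n+1,1)$; then for $j=2,\dots,\min\{n,b+1\}$ rotate rows $1,j$ to annihilate $R(j,1)$. Then for $i=2,\dots,n$: (a) rotate rows $n+1,n+i$ to annihilate $R(n+i,i)$; (b) for $j=i+1,\dots,\min\{n,b+i-1\}$, rotate rows $n+j,n+i$ to annihilate $R(n+i,j)$; (c) rotate rows $i,n+1$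 to annihilate $R(n+1,i)$; (d) if $i<n$, for $j=i+1,\dots,\min\{n,b+i\}$ rotate rows $i,j$ to annihilate $R(j,i)$. On output $QR=\begin{bmatrix}A\\ I\end{bmatrix}$ with $R$ upper triangular. Notation $M(a{:}b,c{:}d)$ denotes the submatrix with rows $a,\dots,b$ and columns $c,\dots,d$. *)

theory Defs
  imports "Jordan_Normal_Form.DL_Rank_Submatrix"
begin

text \<open>All matrices are JNF matrices with 0-based indices; the paper's (1-based)
  row/column index p corresponds to index p - 1 here.\<close>

definition givens :: "nat \<Rightarrow> nat \<Rightarrow> nat \<Rightarrow> real \<Rightarrow> real \<Rightarrow> real mat" where
  "givens N p q c s = mat N N (\<lambda>(i, j).
     if i = p \<and> j = p then c
     else if i = p \<and> j = q then s
     else if i = q \<and> j = p then - s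
     else if i = q \<and> j = q then c
     else if i = j then 1 else 0)"

definition rot_step :: "nat \<Rightarrow> nat \<times> nat \<times> nat \<Rightarrow> real mat \<times> real mat \<Rightarrow> real mat \<times> real mat \<Rightarrow> bool" where
  "rot_step N op st st' \<longleftrightarrow> (case op of (p, q, j) \<Rightarrow>
     (\<exists>c s. c\<^sup>2 + s\<^sup>2 = 1 \<and> p \<noteq> q \<and>
        (let G = givens N (p - 1) (q - 1) c s in
           ((transpose_mat G * snd st) $$ (q - 1, j - 1) = 0 \<and>
            st' = (fst st * G, transpose_mat G * snd st)))))"

inductive rot_seq :: "nat \<Rightarrow> (nat \<times> nat \<times> nat) list \<Rightarrow> real mat \<times> real mat \<Rightarrow> real mat \<times> real mat \<Rightarrow> bool"
  for N where
  Nil: "rot_seq N [] st st"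
| Cons: "rot_step N op st st' \<Longrightarrow> rot_seq N ops st' st'' \<Longrightarrow> rot_seq N (op # ops) st st''"

text \<open>The sequence of rotations performed by Algorithm 2 (paper's 1-based indices),
  each entry (p, q, j) meaning: rotate rows p, q to annihilate R(q, j).\<close>
definition alg2_ops :: "nat \<Rightarrow> nat \<Rightarrow> (nat \<times> nat \<times> nat) list" where
  "alg2_ops n b =
     [(1, n + 1, 1)] @ map (\<lambda>j. (1, j, 1)) [2..<Suc (min n (b + 1))] @
     concat (map (\<lambda>i.
        [(n + 1, n + i, i)]
      @ map (\<lambda>j. (n + j, n + i, j)) [i + 1..<Suc (min n (b + i - 1))]
      @ [(i, n + 1, i)]
      @ (if i < n then map (\<lambda>j. (i, j, i)) [i + 1..<Suc (min n (b + i))] else []))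
      [2..<Suc n])"

definition alg2_init :: "nat \<Rightarrow> real mat \<Rightarrow> real mat \<times> real mat" where
  "alg2_init n A = (one_mat (2 * n),
     mat (2 * n) n (\<lambda>(i, j). if i < n then A $$ (i, j) else if i - n = j then 1 else 0))"

definition alg2_Q :: "nat \<Rightarrow> nat \<Rightarrow> real mat \<Rightarrow> real mat \<Rightarrow> bool" where
  "alg2_Q n b A Q \<longleftrightarrow> (\<exists>R. rot_seq (2 * n) (alg2_ops n b) (alg2_init n A) (Q, R))"

definition bandwidth_le :: "real mat \<Rightarrow> nat \<Rightarrow> bool" where
  "bandwidth_le A b \<longleftrightarrow> (\<forall>i < dim_row A. \<forall>j < dim_col A.
      b < (if i \<le> j then j - i else i - j) \<longrightarrow> A $$ (i, j) = 0)"

end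

theory Submission
  imports Defs
begin


lemma rank_mult_le:
  fixes U V :: "real mat"
  assumes U: "U \<in> carrier_mat k t" and V: "V \<in> carrier_mat t p"
  shows "vec_space.rank k (U * V) \<le> t"
proof -
  define S where "S m = mat k p (\<lambda>(i,j). \<Sum>l<m. U $$ (i,l) * V $$ (l,j))" for m
  have "vec_space.rank k (S m) \<le> m" for m
  proof (induction m)
    case 0
    have "S 0 = 0\<^sub>m k p" unfolding S_def by (intro eq_matI) auto
    then show ?case using vec_space.rank_0I[where ?'a = real, of k p] by simp
  next
    case (Suc m)
    have eq: "S (Suc m) = S m + mat k p (\<lambda>(i,j). U $$ (i,m) * V $$ (m,j))"
      unfolding S_def by (intro eq_matI) auto
    have "vec_space.rank k (S (Suc m)) \<le> vec_space.rank k (S m) + vec_space.rank k (mat k p (\<lambda>(i,j). U $$ (i,m) * V $$ (m,j)))"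
      unfolding eq by (rule vec_space.rank_subadditive) (auto simp: S_def)
    moreover have "vec_space.rank k (mat k p (\<lambda>(i,j). U $$ (i,m) * V $$ (m,j))) \<le> 1"
      by (rule vec_space.rank_le_1_product_entries[where f="\<lambda>i. U $$ (i,m)" and g="\<lambda>j. V $$ (m,j)"]) auto
    ultimately show ?case using Suc by simp
  qed
  moreover have "U * V = S t"
    unfolding S_def using U V
    by (intro eq_matI) (auto simp: scalar_prod_def atLeast0LessThan intro!: sum.cong)
  ultimately show ?thesis by simp
qed



lemma entry_eq: "M = N \<Longrightarrow> M $$ (i,j) = N $$ (i,j)" by simp

lemma core_block:
  fixes C X Y F G1 G2 :: "real mat"
  assumes C: "C \<in> carrier_mat k k" and Csym: "transpose_mat C = C"
    and X: "X \<in> carrier_mat k p" and Y: "Y \<in> carrier_mat k p"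
    and F: "F \<in> carrier_mat k t" and G1: "G1 \<in> carrier_mat t p" and G2: "G2 \<in> carrier_mat t p"
    and e1: "C * X + Y + F * G2 = 0\<^sub>m k p"
    and e2: "X = C * Y + F * G1"
  shows "vec_space.rank k X \<le> 2 * t"
proof -
  define D where "D = 1\<^sub>m k + C * C"
  have D: "D \<in> carrier_mat k k" unfolding D_def using C by auto
  have detD: "det D \<noteq> 0"
  proof
    assume "det D = 0"
    then obtain v where v: "v \<in> carrier_vec k" "v \<noteq> 0\<^sub>v k" "D *\<^sub>v v = 0\<^sub>v k"
      using det_0_iff_vec_prod_zero_field[OF D] by auto
    define w where "w = C *\<^sub>v v"
    have w: "w \<in> carrier_vec k" unfolding w_def using C v by auto
    have "D *\<^sub>v v = v + C *\<^sub>v w" unfolding D_def w_def using C v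
      by (subst add_mult_distrib_mat_vec[of _ k k]) auto
    hence "v \<bullet> (v + C *\<^sub>v w) = v \<bullet> 0\<^sub>v k" using v by simp
    hence "v \<bullet> (v + C *\<^sub>v w) = 0" using v by simp
    hence "v \<bullet> v + v \<bullet> (C *\<^sub>v w) = 0" using v w C
      by (simp add: scalar_prod_add_distrib[of v k])
    moreover have "v \<bullet> (C *\<^sub>v w) = w \<bullet> w"
      using transpose_vec_mult_scalar[OF C w v(1)] Csym w_def by simp
    ultimately have sq: "v \<bullet> v + w \<bullet> w = 0" by simp
    have vv: "v \<bullet> v = (\<Sum>i<k. (v $ i)^2)" using v w unfolding scalar_prod_def
      by (simp add: power2_eq_square atLeast0LessThan)
    have ww: "w \<bullet> w = (\<Sum>i<k. (w $ i)^2)" using v w unfolding scalar_prod_def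
      by (simp add: power2_eq_square atLeast0LessThan)
    have "(\<Sum>i<k. (v $ i)^2) = 0"
      using sq vv ww sum_nonneg[of "{..<k}" "\<lambda>i. (v $ i)^2"] sum_nonneg[of "{..<k}" "\<lambda>i. (w $ i)^2"]
      by fastforce
    hence "\<forall>i\<in>{..<k}. (v $ i)^2 = 0" by (subst (asm) sum_nonneg_eq_0_iff) auto
    hence "v = 0\<^sub>v k" using v by (intro eq_vecI) auto
    with v show False by simp
  qed
  from det_non_zero_imp_unit[OF D detD, of "()"]
  obtain Di where Di: "Di \<in> carrier_mat k k" "Di * D = 1\<^sub>m k"
    unfolding Units_def ring_mat_def by auto
  have Yeq: "Y = - (C * X) + - (F * G2)"
  proof (intro eq_matI)
    fix i j assume ij: "i < dim_row (- (C * X) + - (F * G2))" "j < dim_col (- (C * X) + - (F * G2))"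
    hence ij': "i < k" "j < p" using C X F G2 by auto
    have "(C * X + Y + F * G2) $$ (i,j) = 0" using e1 ij' by simp
    thus "Y $$ (i,j) = (- (C * X) + - (F * G2)) $$ (i,j)" using ij' C X Y F G2 by simp
  qed (use C X Y F G2 in auto)
  have DX: "D * X = F * G1 + - (C * (F * G2))"
  proof (intro eq_matI)
    fix i j assume ij: "i < dim_row (F * G1 + - (C * (F * G2)))" "j < dim_col (F * G1 + - (C * (F * G2)))"
    hence ij': "i < k" "j < p" using C X F G1 G2 by auto
    have CY: "C * Y = - (C * (C * X)) + - (C * (F * G2))" unfolding Yeq
      by (subst mult_add_distrib_mat[of C k k]) (use C X F G2 in auto)
    have x2: "X = C * Y + F * G1" by (rule e2)
    have dx: "D * X = X + C * (C * X)" unfolding D_def using C X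
      by (simp add: add_mult_distrib_mat[of _ k k])
    have a: "X $$ (i,j) = (- (C * (C * X)) + - (C * (F * G2)) + F * G1) $$ (i,j)"
      using entry_eq[OF x2, of i j] entry_eq[OF CY, of i j] ij' C X Y F G1 G2 by simp
    show "(D * X) $$ (i,j) = (F * G1 + - (C * (F * G2))) $$ (i,j)"
      unfolding dx using a ij' C X F G1 G2 by simp
  qed (use D X F G1 G2 C in auto)
  have "X = Di * (D * X)" using Di D X by (simp add: assoc_mult_mat[symmetric, of Di k k D k X p])
  also have "\<dots> = (Di * F) * G1 + (- (Di * (C * F))) * G2"
    unfolding DX by (subst mult_add_distrib_mat[of Di k k]) (use Di C F G1 G2 in \<open>auto simp: assoc_mult_mat[of Di k k "C*F" t G2 p] assoc_mult_mat[of C k k F t G2 p]\<close>)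
  finally have Xe: "X = (Di * F) * G1 + (- (Di * (C * F))) * G2" .
  have "vec_space.rank k X \<le> vec_space.rank k ((Di * F) * G1) + vec_space.rank k ((- (Di * (C * F))) * G2)"
    unfolding Xe by (rule vec_space.rank_subadditive) (use Di C F G1 G2 in auto)
  moreover have "vec_space.rank k ((Di * F) * G1) \<le> t"
    by (rule rank_mult_le) (use Di F G1 in auto)
  moreover have "vec_space.rank k ((- (Di * (C * F))) * G2) \<le> t"
    by (rule rank_mult_le) (use Di C F G2 in auto)
  ultimately show ?thesis by simp
qed



lemma mult_entry: "A \<in> carrier_mat n m \<Longrightarrow> B \<in> carrier_mat m p \<Longrightarrow> i < n \<Longrightarrow> j < p \<Longrightarrow>
  (A * B) $$ (i,j) = (\<Sum>l<m. A $$ (i,l) * B $$ (l,j))"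
  by (auto simp: scalar_prod_def atLeast0LessThan intro!: sum.cong)

lemma sum_split: fixes f :: "nat \<Rightarrow> real" and a c :: nat
  shows "(\<Sum>l<a+c. f l) = (\<Sum>l<a. f l) + (\<Sum>l<c. f (a+l))"
  by (induction c) (auto simp: add.assoc)

lemma band0: "bandwidth_le A b \<Longrightarrow> A \<in> carrier_mat n n \<Longrightarrow> i < n \<Longrightarrow> j < n \<Longrightarrow>
   b < (if i \<le> j then j - i else i - j) \<Longrightarrow> A $$ (i,j) = 0"
  unfolding bandwidth_le_def by auto

lemma upper_block:
  fixes A M P :: "real mat"
  assumes A: "A \<in> carrier_mat n n" and M: "M \<in> carrier_mat n n" and P: "P \<in> carrier_mat n n"
    and As: "transpose_mat A = A" and band: "bandwidth_le A b"
    and e1: "A * M + P = 1\<^sub>m n" and e2: "M = A * P" and kn: "k \<le> n"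
  shows "vec_space.rank k (mat k (n-k) (\<lambda>(i,j). M $$ (i,k+j))) \<le> 2*b"
proof -
  define t where "t = min b (n-k)"
  define C where "C = mat k k (\<lambda>(i,l). A $$ (i,l))"
  define X where "X = mat k (n-k) (\<lambda>(i,j). M $$ (i,k+j))"
  define Y where "Y = mat k (n-k) (\<lambda>(i,j). P $$ (i,k+j))"
  define F where "F = mat k t (\<lambda>(i,l). A $$ (i,k+l))"
  define G1 where "G1 = mat t (n-k) (\<lambda>(l,j). P $$ (k+l,k+j))"
  define G2 where "G2 = mat t (n-k) (\<lambda>(l,j). M $$ (k+l,k+j))"
  have split: "(\<Sum>l<n. A $$ (i,l) * Z $$ (l,k+j)) =
     (\<Sum>l<k. A $$ (i,l) * Z $$ (l,k+j)) + (\<Sum>l<t. A $$ (i,k+l) * Z $$ (k+l,k+j))"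
    if ij: "i < k" "j < n - k" for i j and Z :: "real mat"
  proof -
    have "(\<Sum>l<n. A $$ (i,l) * Z $$ (l,k+j)) = (\<Sum>l<k + (t + (n-k-t)). A $$ (i,l) * Z $$ (l,k+j))"
      using kn by (simp add: t_def)
    also have "\<dots> = (\<Sum>l<k. A $$ (i,l) * Z $$ (l,k+j)) + (\<Sum>l<t. A $$ (i,k+l) * Z $$ (k+l,k+j))
       + (\<Sum>l<n-k-t. A $$ (i,k+(t+l)) * Z $$ (k+(t+l),k+j))"
      by (simp add: sum_split)
    also have "(\<Sum>l<n-k-t. A $$ (i,k+(t+l)) * Z $$ (k+(t+l),k+j)) = 0"
    proof (intro sum.neutral ballI)
      fix l assume l: "l \<in> {..<n-k-t}"
      hence "t = b" unfolding t_def by auto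
      have "A $$ (i,k+(t+l)) = 0"
        by (rule band0[OF band A]) (use l ij \<open>t = b\<close> in auto)
      thus "A $$ (i,k+(t+l)) * Z $$ (k+(t+l),k+j) = 0" by simp
    qed
    finally show ?thesis by simp
  qed
  have Cc: "C \<in> carrier_mat k k" and Xc: "X \<in> carrier_mat k (n-k)" and Yc: "Y \<in> carrier_mat k (n-k)"
    and Fc: "F \<in> carrier_mat k t" and G1c: "G1 \<in> carrier_mat t (n-k)" and G2c: "G2 \<in> carrier_mat t (n-k)"
    unfolding C_def X_def Y_def F_def G1_def G2_def by auto
  have Cs: "transpose_mat C = C"
  proof (intro eq_matI)
    fix i j assume "i < dim_row C" "j < dim_col C"
    hence "i < k" "j < k" unfolding C_def by auto
    thus "transpose_mat C $$ (i,j) = C $$ (i,j)"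
      using entry_eq[OF As, of i j] A kn unfolding C_def by auto
  qed (auto simp: C_def)
  have E1: "C * X + Y + F * G2 = 0\<^sub>m k (n-k)"
  proof (intro eq_matI)
    fix i j assume "i < dim_row (0\<^sub>m k (n - k) :: real mat)" "j < dim_col (0\<^sub>m k (n - k) :: real mat)"
    hence ij: "i < k" "j < n - k" by auto
    have "(A * M + P) $$ (i,k+j) = 0" using e1 ij by simp
    hence "(\<Sum>l<n. A $$ (i,l) * M $$ (l,k+j)) + P $$ (i,k+j) = 0"
      using ij A M P by (simp del: index_mult_mat add: mult_entry[OF A M])
    moreover have "(C * X + Y + F * G2) $$ (i,j) = (C*X)$$(i,j) + Y$$(i,j) + (F*G2)$$(i,j)"
      using ij Cc Xc Yc Fc G2c by simp
    moreover have "(C*X)$$(i,j) = (\<Sum>l<k. A $$ (i,l) * M $$ (l,k+j))"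
      using mult_entry[OF Cc Xc, of i j] ij by (simp del: index_mult_mat add: C_def X_def)
    moreover have "(F*G2)$$(i,j) = (\<Sum>l<t. A $$ (i,k+l) * M $$ (k+l,k+j))"
      using mult_entry[OF Fc G2c, of i j] ij by (simp del: index_mult_mat add: F_def G2_def)
    moreover have "Y$$(i,j) = P $$ (i,k+j)" using ij by (simp add: Y_def)
    ultimately show "(C * X + Y + F * G2) $$ (i,j) = 0\<^sub>m k (n - k) $$ (i,j)"
      using ij split[OF ij, of M] by simp
  qed (use Cc Xc Yc Fc G2c in auto)
  have E2: "X = C * Y + F * G1"
  proof (intro eq_matI)
    fix i j assume "i < dim_row (C * Y + F * G1)" "j < dim_col (C * Y + F * G1)"
    hence ij: "i < k" "j < n - k" using Cc Fc G1c by auto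
    have "M $$ (i,k+j) = (\<Sum>l<n. A $$ (i,l) * P $$ (l,k+j))"
      using entry_eq[OF e2, of i "k+j"] ij A P by (simp del: index_mult_mat add: mult_entry[OF A P])
    moreover have "(C * Y + F * G1) $$ (i,j) = (C*Y)$$(i,j) + (F*G1)$$(i,j)"
      using ij Cc Yc Fc G1c by simp
    moreover have "(C*Y)$$(i,j) = (\<Sum>l<k. A $$ (i,l) * P $$ (l,k+j))"
      using mult_entry[OF Cc Yc, of i j] ij by (simp del: index_mult_mat add: C_def Y_def)
    moreover have "(F*G1)$$(i,j) = (\<Sum>l<t. A $$ (i,k+l) * P $$ (k+l,k+j))"
      using mult_entry[OF Fc G1c, of i j] ij by (simp del: index_mult_mat add: F_def G1_def)
    moreover have "X$$(i,j) = M $$ (i,k+j)" using ij by (simp add: X_def)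
    ultimately show "X $$ (i,j) = (C * Y + F * G1) $$ (i,j)"
      using ij split[OF ij, of P] by simp
  qed (use Cc Xc Fc G1c in auto)
  have "vec_space.rank k X \<le> 2 * t"
    by (rule core_block[OF Cc Cs Xc Yc Fc G1c G2c E1 E2])
  thus ?thesis unfolding X_def t_def by simp
qed

lemma lower_block:
  fixes A M P :: "real mat"
  assumes A: "A \<in> carrier_mat n n" and M: "M \<in> carrier_mat n n" and P: "P \<in> carrier_mat n n"
    and As: "transpose_mat A = A" and band: "bandwidth_le A b"
    and e1: "A * M + P = 1\<^sub>m n" and e2: "M = A * P" and kn: "k \<le> n"
  shows "vec_space.rank (n-k) (mat (n-k) k (\<lambda>(i,j). M $$ (k+i,j))) \<le> 2*b"
proof -
  define t where "t = min b k"
  define C where "C = mat (n-k) (n-k) (\<lambda>(i,l). A $$ (k+i,k+l))"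
  define X where "X = mat (n-k) k (\<lambda>(i,j). M $$ (k+i,j))"
  define Y where "Y = mat (n-k) k (\<lambda>(i,j). P $$ (k+i,j))"
  define F where "F = mat (n-k) t (\<lambda>(i,l). A $$ (k+i,k-t+l))"
  define G1 where "G1 = mat t k (\<lambda>(l,j). P $$ (k-t+l,j))"
  define G2 where "G2 = mat t k (\<lambda>(l,j). M $$ (k-t+l,j))"
  have split: "(\<Sum>l<n. A $$ (k+i,l) * Z $$ (l,j)) =
     (\<Sum>l<n-k. A $$ (k+i,k+l) * Z $$ (k+l,j)) + (\<Sum>l<t. A $$ (k+i,k-t+l) * Z $$ (k-t+l,j))"
    if ij: "i < n-k" "j < k" for i j and Z :: "real mat"
  proof -
    have "(\<Sum>l<n. A $$ (k+i,l) * Z $$ (l,j)) = (\<Sum>l<(k-t+t) + (n-k). A $$ (k+i,l) * Z $$ (l,j))"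
      using kn by (simp add: t_def)
    also have "\<dots> = (\<Sum>l<k-t. A $$ (k+i,l) * Z $$ (l,j)) + (\<Sum>l<t. A $$ (k+i,k-t+l) * Z $$ (k-t+l,j))
       + (\<Sum>l<n-k. A $$ (k+i,(k-t+t)+l) * Z $$ ((k-t+t)+l,j))"
      by (simp add: sum_split)
    also have "(\<Sum>l<k-t. A $$ (k+i,l) * Z $$ (l,j)) = 0"
    proof (intro sum.neutral ballI)
      fix l assume l: "l \<in> {..<k-t}"
      hence "t = b" unfolding t_def by auto
      have "A $$ (k+i,l) = 0"
        by (rule band0[OF band A]) (use l ij \<open>t = b\<close> in auto)
      thus "A $$ (k+i,l) * Z $$ (l,j) = 0" by simp
    qed
    finally show ?thesis using kn by (simp add: t_def)
  qed
  have Cc: "C \<in> carrier_mat (n-k) (n-k)" and Xc: "X \<in> carrier_mat (n-k) k" and Yc: "Y \<in> carrier_mat (n-k) k"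
    and Fc: "F \<in> carrier_mat (n-k) t" and G1c: "G1 \<in> carrier_mat t k" and G2c: "G2 \<in> carrier_mat t k"
    unfolding C_def X_def Y_def F_def G1_def G2_def by auto
  have Cs: "transpose_mat C = C"
  proof (intro eq_matI)
    fix i j assume "i < dim_row C" "j < dim_col C"
    hence "i < n-k" "j < n-k" unfolding C_def by auto
    thus "transpose_mat C $$ (i,j) = C $$ (i,j)"
      using entry_eq[OF As, of "k+i" "k+j"] A kn unfolding C_def by auto
  qed (auto simp: C_def)
  have E1: "C * X + Y + F * G2 = 0\<^sub>m (n-k) k"
  proof (intro eq_matI)
    fix i j assume "i < dim_row (0\<^sub>m (n - k) k :: real mat)" "j < dim_col (0\<^sub>m (n - k) k :: real mat)"
    hence ij: "i < n - k" "j < k" by auto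
    have "(A * M + P) $$ (k+i,j) = 0" using e1 ij by simp
    hence "(\<Sum>l<n. A $$ (k+i,l) * M $$ (l,j)) + P $$ (k+i,j) = 0"
      using ij A M P by (simp del: index_mult_mat add: mult_entry[OF A M])
    moreover have "(C * X + Y + F * G2) $$ (i,j) = (C*X)$$(i,j) + Y$$(i,j) + (F*G2)$$(i,j)"
      using ij Cc Xc Yc Fc G2c by simp
    moreover have "(C*X)$$(i,j) = (\<Sum>l<n-k. A $$ (k+i,k+l) * M $$ (k+l,j))"
      using mult_entry[OF Cc Xc, of i j] ij by (simp del: index_mult_mat add: C_def X_def)
    moreover have "(F*G2)$$(i,j) = (\<Sum>l<t. A $$ (k+i,k-t+l) * M $$ (k-t+l,j))"
      using mult_entry[OF Fc G2c, of i j] ij by (simp del: index_mult_mat add: F_def G2_def)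
    moreover have "Y$$(i,j) = P $$ (k+i,j)" using ij by (simp add: Y_def)
    ultimately show "(C * X + Y + F * G2) $$ (i,j) = 0\<^sub>m (n - k) k $$ (i,j)"
      using ij split[OF ij, of M] by simp
  qed (use Cc Xc Yc Fc G2c in auto)
  have E2: "X = C * Y + F * G1"
  proof (intro eq_matI)
    fix i j assume "i < dim_row (C * Y + F * G1)" "j < dim_col (C * Y + F * G1)"
    hence ij: "i < n - k" "j < k" using Cc Fc G1c by auto
    have "M $$ (k+i,j) = (\<Sum>l<n. A $$ (k+i,l) * P $$ (l,j))"
      using entry_eq[OF e2, of "k+i" j] ij A P by (simp del: index_mult_mat add: mult_entry[OF A P])
    moreover have "(C * Y + F * G1) $$ (i,j) = (C*Y)$$(i,j) + (F*G1)$$(i,j)"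
      using ij Cc Yc Fc G1c by simp
    moreover have "(C*Y)$$(i,j) = (\<Sum>l<n-k. A $$ (k+i,k+l) * P $$ (k+l,j))"
      using mult_entry[OF Cc Yc, of i j] ij by (simp del: index_mult_mat add: C_def Y_def)
    moreover have "(F*G1)$$(i,j) = (\<Sum>l<t. A $$ (k+i,k-t+l) * P $$ (k-t+l,j))"
      using mult_entry[OF Fc G1c, of i j] ij by (simp del: index_mult_mat add: F_def G1_def)
    moreover have "X$$(i,j) = M $$ (k+i,j)" using ij by (simp add: X_def)
    ultimately show "X $$ (i,j) = (C * Y + F * G1) $$ (i,j)"
      using ij split[OF ij, of P] by simp
  qed (use Cc Xc Fc G1c in auto)
  have "vec_space.rank (n-k) X \<le> 2 * t"
    by (rule core_block[OF Cc Cs Xc Yc Fc G1c G2c E1 E2])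
  thus ?thesis unfolding X_def t_def by simp
qed



lemma givens_carrier[simp]: "givens N p q c s \<in> carrier_mat N N"
  unfolding givens_def by auto

lemma givens_dim[simp]: "dim_row (givens N p q c s) = N" "dim_col (givens N p q c s) = N"
  unfolding givens_def by auto

lemma givensT_mult:
  fixes X :: "real mat"
  assumes X: "X \<in> carrier_mat N m" and pq: "p < N" "q < N" "p \<noteq> q" and r: "r < N" and cc: "cc < m"
  shows "(transpose_mat (givens N p q c s) * X) $$ (r,cc) =
    (if r = p then c * X $$ (p,cc) - s * X $$ (q,cc)
     else if r = q then s * X $$ (p,cc) + c * X $$ (q,cc) else X $$ (r,cc))"
proof -
  let ?G = "givens N p q c s"
  let ?a = "(if r = p then c else if r = q then s else 0) * X $$ (p,cc)"
  let ?b = "(if r = p then - s else if r = q then c else 0) * X $$ (q,cc)"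
  let ?g = "(if r \<noteq> p \<and> r \<noteq> q then X $$ (r,cc) else 0)"
  have "(transpose_mat ?G * X) $$ (r,cc) = (\<Sum>l<N. transpose_mat ?G $$ (r,l) * X $$ (l,cc))"
    by (rule mult_entry[OF _ X r cc]) simp
  also have "\<dots> = (\<Sum>l<N. (if l = p then ?a else 0) + (if l = q then ?b else 0) + (if l = r then ?g else 0))"
    using pq r by (intro sum.cong) (auto simp: givens_def)
  also have "\<dots> = ?a + ?b + ?g"
    using pq r by (simp add: sum.distrib)
  finally show ?thesis using pq by auto
qed

lemma givens_orth:
  assumes pq: "p < N" "q < N" "p \<noteq> q" and cs: "c\<^sup>2 + s\<^sup>2 = (1::real)"
  shows "transpose_mat (givens N p q c s) * givens N p q c s = 1\<^sub>m N"
    and "givens N p q c s * transpose_mat (givens N p q c s) = 1\<^sub>m N"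
proof -
  show 1: "transpose_mat (givens N p q c s) * givens N p q c s = 1\<^sub>m N"
  proof (intro eq_matI)
    fix i j assume "i < dim_row (1\<^sub>m N :: real mat)" "j < dim_col (1\<^sub>m N :: real mat)"
    hence ij: "i < N" "j < N" by auto
    show "(transpose_mat (givens N p q c s) * givens N p q c s) $$ (i, j) = 1\<^sub>m N $$ (i, j)"
      apply (subst givensT_mult[OF givens_carrier pq ij])
      using ij pq cs by (auto simp: givens_def power2_eq_square algebra_simps)
  qed auto
  show "givens N p q c s * transpose_mat (givens N p q c s) = 1\<^sub>m N"
    by (rule mat_mult_left_right_inverse[OF _ _ 1]) auto
qed



definition Zr :: "nat \<Rightarrow> real mat \<Rightarrow> nat \<Rightarrow> nat \<Rightarrow> nat \<Rightarrow> bool" where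
  "Zr m R r lo hi \<longleftrightarrow> (\<forall>C. 1 \<le> C \<longrightarrow> C \<le> m \<longrightarrow> (C < lo \<or> hi < C) \<longrightarrow> R $$ (r - 1, C - 1) = 0)"

lemma Zr_mono: "Zr m R r lo hi \<Longrightarrow> lo' \<le> lo \<Longrightarrow> hi \<le> hi' \<Longrightarrow> Zr m R r lo' hi'"
  unfolding Zr_def by fastforce

lemma rot_step_unfold:
  assumes "rot_step N (p,q,j) st st'"
  obtains c s where "c\<^sup>2 + s\<^sup>2 = 1" "p \<noteq> q"
    "(transpose_mat (givens N (p - 1) (q - 1) c s) * snd st) $$ (q - 1, j - 1) = 0"
    "st' = (fst st * givens N (p - 1) (q - 1) c s, transpose_mat (givens N (p - 1) (q - 1) c s) * snd st)"
  using assms unfolding rot_step_def Let_def by auto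

lemma step_R:
  assumes st: "rot_step N (p,q,j) st st'" and R: "snd st \<in> carrier_mat N m"
    and p: "1 \<le> p" "p \<le> N" and q: "1 \<le> q" "q \<le> N"
  shows "snd st' \<in> carrier_mat N m"
    and "\<And>r lo hi. 1 \<le> r \<Longrightarrow> r \<le> N \<Longrightarrow> r \<noteq> p \<Longrightarrow> r \<noteq> q \<Longrightarrow> Zr m (snd st) r lo hi \<Longrightarrow> Zr m (snd st') r lo hi"
    and "\<And>lo hi. Zr m (snd st) p lo hi \<Longrightarrow> Zr m (snd st) q lo hi \<Longrightarrow> Zr m (snd st') p lo hi"
    and "\<And>lo hi. Zr m (snd st) p lo hi \<Longrightarrow> Zr m (snd st) q lo hi \<Longrightarrow> j = lo \<Longrightarrow> Zr m (snd st') q (Suc lo) hi"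
proof -
  obtain c s where cs: "c\<^sup>2 + s\<^sup>2 = 1" "p \<noteq> q"
    and kill: "(transpose_mat (givens N (p - 1) (q - 1) c s) * snd st) $$ (q - 1, j - 1) = 0"
    and st': "st' = (fst st * givens N (p - 1) (q - 1) c s, transpose_mat (givens N (p - 1) (q - 1) c s) * snd st)"
    using rot_step_unfold[OF st] by blast
  let ?G = "givens N (p - 1) (q - 1) c s"
  have pq: "p - 1 < N" "q - 1 < N" "p - 1 \<noteq> q - 1" using p q cs by auto
  have ent: "snd st' $$ (r, C) = (if r = p - 1 then c * snd st $$ (p - 1, C) - s * snd st $$ (q - 1, C)
     else if r = q - 1 then s * snd st $$ (p - 1, C) + c * snd st $$ (q - 1, C) else snd st $$ (r, C))"
    if "r < N" "C < m" for r C
    unfolding st' using givensT_mult[OF R pq that] by simp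
  show "snd st' \<in> carrier_mat N m" unfolding st' using R by auto
  show "Zr m (snd st') r lo hi" if "1 \<le> r" "r \<le> N" "r \<noteq> p" "r \<noteq> q" "Zr m (snd st) r lo hi" for r lo hi
    using that p q unfolding Zr_def by (auto simp: ent)
  show "Zr m (snd st') p lo hi" if "Zr m (snd st) p lo hi" "Zr m (snd st) q lo hi" for lo hi
    using that p q unfolding Zr_def by (auto simp: ent)
  show "Zr m (snd st') q (Suc lo) hi" if "Zr m (snd st) p lo hi" "Zr m (snd st) q lo hi" "j = lo" for lo hi
    unfolding Zr_def
  proof (intro allI impI)
    fix C assume C: "1 \<le> C" "C \<le> m" "C < Suc lo \<or> hi < C"
    show "snd st' $$ (q - 1, C - 1) = 0"
    proof (cases "C = j")
      case True
      with kill st' show ?thesis by simp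
    next
      case False
      with C that have "C < lo \<or> hi < C" by auto
      thus ?thesis using that C p q cs unfolding Zr_def by (auto simp: ent)
    qed
  qed
qed

lemma step_Q:
  assumes st: "rot_step N (p,q,j) st st'" and R: "snd st \<in> carrier_mat N m" and Q: "fst st \<in> carrier_mat N N"
    and p: "1 \<le> p" "p \<le> N" and q: "1 \<le> q" "q \<le> N"
    and orth: "transpose_mat (fst st) * fst st = 1\<^sub>m N"
  shows "fst st' \<in> carrier_mat N N" "fst st' * snd st' = fst st * snd st"
    "transpose_mat (fst st') * fst st' = 1\<^sub>m N"
proof -
  obtain c s where cs: "c\<^sup>2 + s\<^sup>2 = 1" "p \<noteq> q"
    and st': "st' = (fst st * givens N (p - 1) (q - 1) c s, transpose_mat (givens N (p - 1) (q - 1) c s) * snd st)"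
    using rot_step_unfold[OF st] by blast
  have pq: "p - 1 < N" "q - 1 < N" "p - 1 \<noteq> q - 1" using p q cs by auto
  define G where "G = givens N (p - 1) (q - 1) c s"
  note o = givens_orth[OF pq cs(1), folded G_def]
  have G: "G \<in> carrier_mat N N" unfolding G_def by simp
  have GT: "transpose_mat G \<in> carrier_mat N N" using G by simp
  have st'': "st' = (fst st * G, transpose_mat G * snd st)" unfolding st' G_def ..
  show "fst st' \<in> carrier_mat N N" unfolding st'' using Q G by auto
  have "fst st' * snd st' = fst st * (G * (transpose_mat G * snd st))"
    unfolding st'' fst_conv snd_conv by (rule assoc_mult_mat) (use Q R G in auto)
  also have "\<dots> = fst st * ((G * transpose_mat G) * snd st)"
    using R G GT by (simp add: assoc_mult_mat[of G N N _ N _ m])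
  also have "\<dots> = fst st * snd st" unfolding o(2) using R by simp
  finally show "fst st' * snd st' = fst st * snd st" .
  have "transpose_mat (fst st') * fst st' = transpose_mat G * ((transpose_mat (fst st) * fst st) * G)"
    unfolding st'' using Q G GT
    by (simp add: transpose_mult[of _ N N] assoc_mult_mat[of _ N N _ N _ N])
  also have "\<dots> = 1\<^sub>m N" unfolding orth using o(1) G by simp
  finally show "transpose_mat (fst st') * fst st' = 1\<^sub>m N" .
qed

lemma rot_seq_append: "rot_seq N (xs @ ys) s s'' \<Longrightarrow> \<exists>s'. rot_seq N xs s s' \<and> rot_seq N ys s' s''"
proof (induction xs arbitrary: s)
  case Nil thus ?case using rot_seq.Nil[of N s] by (metis append_Nil)
next
  case (Cons x xs)
  from Cons.prems obtain s1 where "rot_step N x s s1" "rot_seq N (xs @ ys) s1 s''"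
    by (auto elim: rot_seq.cases)
  from Cons.IH[OF this(2)] obtain s2 where "rot_seq N xs s1 s2" "rot_seq N ys s2 s''" by blast
  with \<open>rot_step N x s s1\<close> show ?case by (meson rot_seq.Cons)
qed

lemma rot_seq_single: "rot_seq N [x] s s' \<Longrightarrow> rot_step N x s s'"
  by (auto elim!: rot_seq.cases)

lemma rot_seq_loop:
  assumes step: "\<And>j st st'. a \<le> j \<Longrightarrow> j < e \<Longrightarrow> I j st \<Longrightarrow> rot_seq N (g j) st st' \<Longrightarrow> I (Suc j) st'"
  shows "rot_seq N (concat (map g [a..<e])) st st' \<Longrightarrow> I a st \<Longrightarrow> a \<le> e \<Longrightarrow> I e st'"
  using step
proof (induction "e - a" arbitrary: a st)
  case 0
  hence "a = e" by simp
  with 0 show ?case by (auto elim: rot_seq.cases)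
next
  case (Suc d)
  hence ae: "a < e" by simp
  hence "[a..<e] = a # [Suc a..<e]" by (simp add: upt_conv_Cons)
  with Suc.prems(1) have "rot_seq N (g a @ concat (map g [Suc a..<e])) st st'" by simp
  then obtain s1 where s1: "rot_seq N (g a) st s1" "rot_seq N (concat (map g [Suc a..<e])) s1 st'"
    using rot_seq_append by blast
  have "I (Suc a) s1" using Suc.prems(4)[OF _ ae Suc.prems(2) s1(1)] by simp
  show ?case
    by (rule Suc.hyps(1)[of "Suc a" s1]) (use Suc.hyps(2) ae s1 \<open>I (Suc a) s1\<close> Suc.prems(4) in auto)
qed

lemma rot_seq_loop1:
  assumes step: "\<And>j st st'. a \<le> j \<Longrightarrow> j < e \<Longrightarrow> I j st \<Longrightarrow> rot_step N (f j) st st' \<Longrightarrow> I (Suc j) st'"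
  shows "rot_seq N (map f [a..<e]) st st' \<Longrightarrow> I a st \<Longrightarrow> a \<le> e \<Longrightarrow> I e st'"
proof -
  have "map f [a..<e] = concat (map (\<lambda>j. [f j]) [a..<e])" by (induction "[a..<e]") auto
  thus "rot_seq N (map f [a..<e]) st st' \<Longrightarrow> I a st \<Longrightarrow> a \<le> e \<Longrightarrow> I e st'"
    using rot_seq_loop[of a e I N "\<lambda>j. [f j]"] step rot_seq_single by metis
qed



definition Tp :: "nat \<Rightarrow> nat \<Rightarrow> nat \<Rightarrow> real mat \<Rightarrow> bool" where
  "Tp n b i R \<longleftrightarrow> (\<forall>r. i \<le> r \<longrightarrow> r \<le> n \<longrightarrow> Zr n R r (max i (r - b)) (r + b))"

definition Bp :: "nat \<Rightarrow> nat \<Rightarrow> nat \<Rightarrow> real mat \<Rightarrow> bool" where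
  "Bp n b i R \<longleftrightarrow> Zr n R (n+1) (i+1) (i+b) \<and> (\<forall>j'. 2 \<le> j' \<longrightarrow> j' \<le> i \<longrightarrow> Zr n R (n+j') (n+1) 0)
     \<and> (\<forall>j'. i < j' \<longrightarrow> j' \<le> n \<longrightarrow> Zr n R (n+j') j' (max j' (i+b-1)))"

definition Invd :: "nat \<Rightarrow> nat \<Rightarrow> nat \<Rightarrow> nat \<Rightarrow> real mat \<Rightarrow> bool" where
  "Invd n b i j R \<longleftrightarrow> R \<in> carrier_mat (2*n) n \<and> Bp n b i R \<and> Zr n R i i (j - 1 + b)
     \<and> (\<forall>r. i < r \<longrightarrow> r < j \<longrightarrow> r \<le> n \<longrightarrow> Zr n R r (i+1) (r+b))
     \<and> (\<forall>r. j \<le> r \<longrightarrow> r \<le> n \<longrightarrow> Zr n R r (max i (r - b)) (r+b))"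

lemma Bp_keep:
  assumes st: "rot_step (2*n) (p,q,jj) st st'" and R: "snd st \<in> carrier_mat (2*n) n"
    and p: "1 \<le> p" "p \<le> n" and q: "1 \<le> q" "q \<le> n" and B: "Bp n b i (snd st)" and i: "i \<le> n"
  shows "Bp n b i (snd st')"
proof -
  have keep: "Zr n (snd st') r lo hi" if "n < r" "r \<le> 2*n" "Zr n (snd st) r lo hi" for r lo hi
    using step_R(2)[OF st R _ _ _ _ _ _ _ _ that(3)] p q that by auto
  show ?thesis using B p i unfolding Bp_def by (auto intro!: keep)
qed

lemma stage_d_step:
  assumes st: "rot_step (2*n) (i,j,i) st st'" and I: "Invd n b i j (snd st)"
    and ij: "1 \<le> i" "i < j" "j \<le> n"
  shows "Invd n b i (Suc j) (snd st')"
proof -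
  have R: "snd st \<in> carrier_mat (2*n) n" using I unfolding Invd_def by auto
  note S = step_R[OF st R, of ] 
  have p: "1 \<le> i" "i \<le> 2*n" and q: "1 \<le> j" "j \<le> 2*n" using ij by auto
  note S1 = step_R(1)[OF st R p q] and S2 = step_R(2)[OF st R p q]
    and S3 = step_R(3)[OF st R p q] and S4 = step_R(4)[OF st R p q]
  have zi: "Zr n (snd st) i i (j + b)"
    by (rule Zr_mono[of _ _ _ i "j - 1 + b"]) (use I in \<open>auto simp: Invd_def\<close>)
  have zj: "Zr n (snd st) j i (j + b)"
    by (rule Zr_mono[of _ _ _ "max i (j - b)" "j + b"]) (use I ij in \<open>auto simp: Invd_def\<close>)
  have ni: "Zr n (snd st') i i (Suc j - 1 + b)" using S3[OF zi zj] by simp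
  have nj: "Zr n (snd st') j (i+1) (j + b)" using S4[OF zi zj refl] by simp
  have B: "Bp n b i (snd st')" by (rule Bp_keep[OF st R]) (use ij I in \<open>auto simp: Invd_def\<close>)
  have mid: "Zr n (snd st') r (i+1) (r+b)" if "i < r" "r < Suc j" "r \<le> n" for r
  proof (cases "r = j")
    case True thus ?thesis using nj by simp
  next
    case False
    hence "Zr n (snd st) r (i+1) (r+b)" using I that unfolding Invd_def by auto
    thus ?thesis using S2 that False ij by auto
  qed
  have hi: "Zr n (snd st') r (max i (r - b)) (r+b)" if "Suc j \<le> r" "r \<le> n" for r
  proof -
    have "Zr n (snd st) r (max i (r - b)) (r+b)" using I that unfolding Invd_def by auto
    thus ?thesis using S2 that ij by auto
  qed
  show ?thesis unfolding Invd_def using S1 B ni mid hi by auto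
qed



definition Inv :: "nat \<Rightarrow> nat \<Rightarrow> nat \<Rightarrow> real mat \<Rightarrow> bool" where
  "Inv n b i R \<longleftrightarrow> R \<in> carrier_mat (2*n) n \<and> Tp n b i R \<and> Bp n b (i - 1) R"

definition Invm :: "nat \<Rightarrow> nat \<Rightarrow> nat \<Rightarrow> real mat \<Rightarrow> bool" where
  "Invm n b i R \<longleftrightarrow> R \<in> carrier_mat (2*n) n \<and> Tp n b i R \<and> Zr n R (n+1) i (i+b-1)
     \<and> (\<forall>j'. 2 \<le> j' \<longrightarrow> j' \<le> i \<longrightarrow> Zr n R (n+j') (n+1) 0)
     \<and> (\<forall>j'. i < j' \<longrightarrow> j' \<le> n \<longrightarrow> Zr n R (n+j') j' (max j' (i+b-1)))"

definition Invb :: "nat \<Rightarrow> nat \<Rightarrow> nat \<Rightarrow> nat \<Rightarrow> real mat \<Rightarrow> bool" where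
  "Invb n b i j R \<longleftrightarrow> R \<in> carrier_mat (2*n) n \<and> Tp n b i R \<and> Zr n R (n+1) i (i+b-1)
     \<and> (\<forall>j'. 2 \<le> j' \<longrightarrow> j' < i \<longrightarrow> Zr n R (n+j') (n+1) 0)
     \<and> Zr n R (n+i) j (i+b-1)
     \<and> (\<forall>j'. i < j' \<longrightarrow> j' < j \<longrightarrow> j' \<le> n \<longrightarrow> Zr n R (n+j') j' (i+b-1))
     \<and> (\<forall>j'. j \<le> j' \<longrightarrow> j' \<le> n \<longrightarrow> Zr n R (n+j') j' (max j' (i+b-2)))"

lemma Tp_keep:
  assumes st: "rot_step (2*n) (p,q,jj) st st'" and R: "snd st \<in> carrier_mat (2*n) n"
    and p: "n < p" "p \<le> 2*n" and q: "n < q" "q \<le> 2*n" and T: "Tp n b i (snd st)" and i: "1 \<le> i"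
  shows "Tp n b i (snd st')"
proof -
  have keep: "Zr n (snd st') r lo hi" if "1 \<le> r" "r \<le> n" "Zr n (snd st) r lo hi" for r lo hi
    using step_R(2)[OF st R _ _ _ _ _ _ _ _ that(3)] p q that by auto
  show ?thesis using T i unfolding Tp_def by (auto intro!: keep)
qed

lemma stage_b_step:
  assumes st: "rot_step (2*n) (n+j,n+i,j) st st'" and I: "Invb n b i j (snd st)"
    and ij: "2 \<le> i" "i < j" "j \<le> n" "j \<le> b + i - 1"
  shows "Invb n b i (Suc j) (snd st')"
proof -
  have R: "snd st \<in> carrier_mat (2*n) n" using I unfolding Invb_def by auto
  have p: "1 \<le> n+j" "n+j \<le> 2*n" and q: "1 \<le> n+i" "n+i \<le> 2*n" using ij by auto
  note S1 = step_R(1)[OF st R p q] and S2 = step_R(2)[OF st R p q]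
    and S3 = step_R(3)[OF st R p q] and S4 = step_R(4)[OF st R p q]
  have zj: "Zr n (snd st) (n+j) j (i+b-1)"
    by (rule Zr_mono[of _ _ _ j "max j (i+b-2)"]) (use I ij in \<open>auto simp: Invb_def\<close>)
  have zi: "Zr n (snd st) (n+i) j (i+b-1)" using I unfolding Invb_def by auto
  have nj: "Zr n (snd st') (n+j) j (i+b-1)" using S3[OF zj zi] .
  have ni: "Zr n (snd st') (n+i) (Suc j) (i+b-1)" using S4[OF zj zi refl] .
  have T: "Tp n b i (snd st')" by (rule Tp_keep[OF st R]) (use ij I in \<open>auto simp: Invb_def\<close>)
  have keep: "Zr n (snd st') r lo hi" if "1 \<le> r" "r \<le> 2*n" "r \<noteq> n+j" "r \<noteq> n+i" "Zr n (snd st) r lo hi" for r lo hi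
    using S2 that by auto
  have r1: "Zr n (snd st') (n+1) i (i+b-1)" by (rule keep) (use I ij in \<open>auto simp: Invb_def\<close>)
  have r2: "Zr n (snd st') (n+j') (n+1) 0" if "2 \<le> j'" "j' < i" for j'
    by (rule keep) (use I ij that in \<open>auto simp: Invb_def\<close>)
  have r3: "Zr n (snd st') (n+j') j' (i+b-1)" if "i < j'" "j' < Suc j" "j' \<le> n" for j'
  proof (cases "j' = j")
    case True thus ?thesis using nj by simp
  next
    case False thus ?thesis by (intro keep) (use I ij that in \<open>auto simp: Invb_def\<close>)
  qed
  have r4: "Zr n (snd st') (n+j') j' (max j' (i+b-2))" if "Suc j \<le> j'" "j' \<le> n" for j'
    by (rule keep) (use I ij that in \<open>auto simp: Invb_def\<close>)
  show ?thesis unfolding Invb_def using S1 T r1 r2 r3 r4 ni by auto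
qed

lemma stage_ab:
  assumes i: "2 \<le> i" "i \<le> n" and hb: "1 \<le> b" and I: "Inv n b i (snd st)"
    and seq: "rot_seq (2*n) ([(n + 1, n + i, i)] @ map (\<lambda>j. (n + j, n + i, j)) [i + 1..<Suc (min n (b + i - 1))]) st st'"
  shows "Invm n b i (snd st')"
proof -
  obtain s1 where s1: "rot_step (2*n) (n+1, n+i, i) st s1"
     and s2: "rot_seq (2*n) (map (\<lambda>j. (n + j, n + i, j)) [i + 1..<Suc (min n (b + i - 1))]) s1 st'"
    using rot_seq_append[OF seq] rot_seq_single by blast
  have R: "snd st \<in> carrier_mat (2*n) n" using I unfolding Inv_def by auto
  have p: "1 \<le> n+1" "n+1 \<le> 2*n" and q: "1 \<le> n+i" "n+i \<le> 2*n" using i by auto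
  note S1 = step_R(1)[OF s1 R p q] and S2 = step_R(2)[OF s1 R p q]
    and S3 = step_R(3)[OF s1 R p q] and S4 = step_R(4)[OF s1 R p q]
  have z1: "Zr n (snd st) (n+1) i (i+b-1)" using I i unfolding Inv_def Bp_def by auto
  have zi: "Zr n (snd st) (n+i) i (i+b-1)"
  proof (rule Zr_mono[of _ _ _ i "max i (i - 1 + b - 1)"])
    show "Zr n (snd st) (n + i) i (max i (i - 1 + b - 1))" using I i unfolding Inv_def Bp_def by auto
    show "max i (i - 1 + b - 1) \<le> i + b - 1" using hb i by linarith
  qed simp
  have keep: "Zr n (snd s1) r lo hi" if "1 \<le> r" "r \<le> 2*n" "r \<noteq> n+1" "r \<noteq> n+i" "Zr n (snd st) r lo hi" for r lo hi
    using S2 that by auto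
  have T: "Tp n b i (snd s1)" by (rule Tp_keep[OF s1 R]) (use i I in \<open>auto simp: Inv_def\<close>)
  have I1: "Invb n b i (i+1) (snd s1)"
    unfolding Invb_def
  proof (intro conjI allI impI)
    show "snd s1 \<in> carrier_mat (2*n) n" by (rule S1)
    show "Tp n b i (snd s1)" by (rule T)
    show "Zr n (snd s1) (n+1) i (i+b-1)" using S3[OF z1 zi] .
    show "Zr n (snd s1) (n+i) (i+1) (i+b-1)" using S4[OF z1 zi refl] by simp
    show "Zr n (snd s1) (n+j') (n+1) 0" if "2 \<le> j'" "j' < i" for j'
      by (rule keep) (use I i that in \<open>auto simp: Inv_def Bp_def\<close>)
    show "Zr n (snd s1) (n+j') j' (i+b-1)" if "i < j'" "j' < i+1" "j' \<le> n" for j'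
      using that by simp
    show "Zr n (snd s1) (n+j') j' (max j' (i+b-2))" if "i+1 \<le> j'" "j' \<le> n" for j'
    proof (rule keep)
      show "Zr n (snd st) (n + j') j' (max j' (i + b - 2))"
        using I i that unfolding Inv_def Bp_def
        by (auto simp: numeral_2_eq_2 elim!: allE[of _ j'] intro: Zr_mono)
    qed (use i that in auto)
  qed
  have Iend: "Invb n b i (Suc (min n (b + i - 1))) (snd st')"
    by (rule rot_seq_loop1[where I="\<lambda>j s. Invb n b i j (snd s)", OF _ s2 I1])
       (use hb i in \<open>auto intro!: stage_b_step\<close>)
  show ?thesis
    unfolding Invm_def
  proof (intro conjI allI impI)
    show "snd st' \<in> carrier_mat (2*n) n" "Tp n b i (snd st')" "Zr n (snd st') (n+1) i (i+b-1)"
      using Iend unfolding Invb_def by auto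
    show "Zr n (snd st') (n+j') (n+1) 0" if "2 \<le> j'" "j' \<le> i" for j'
    proof (cases "j' = i")
      case True
      have "Zr n (snd st') (n+i) (Suc (min n (b + i - 1))) (i+b-1)" using Iend unfolding Invb_def by auto
      thus ?thesis using True unfolding Zr_def by auto
    next
      case False thus ?thesis using Iend that unfolding Invb_def by auto
    qed
    show "Zr n (snd st') (n+j') j' (max j' (i+b-1))" if "i < j'" "j' \<le> n" for j'
    proof (cases "j' < Suc (min n (b + i - 1))")
      case True
      hence "Zr n (snd st') (n+j') j' (i+b-1)" using Iend that unfolding Invb_def by auto
      thus ?thesis by (rule Zr_mono) auto
    next
      case False
      hence "Zr n (snd st') (n+j') j' (max j' (i+b-2))" using Iend that unfolding Invb_def by auto
      thus ?thesis by (rule Zr_mono) (use False that in auto)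
    qed
  qed
qed



lemma stage_cd:
  assumes i: "1 \<le> i" "i \<le> n" and hb: "1 \<le> b" and I: "Invm n b i (snd st)"
    and seq: "rot_seq (2*n) ([(i, n + 1, i)] @ (if i < n then map (\<lambda>j. (i, j, i)) [i + 1..<Suc (min n (b + i))] else [])) st st'"
  shows "Inv n b (i+1) (snd st')"
proof -
  obtain s1 where s1: "rot_step (2*n) (i, n+1, i) st s1"
     and s2: "rot_seq (2*n) (if i < n then map (\<lambda>j. (i, j, i)) [i + 1..<Suc (min n (b + i))] else []) s1 st'"
    using rot_seq_append[OF seq] rot_seq_single by blast
  have R: "snd st \<in> carrier_mat (2*n) n" using I unfolding Invm_def by auto
  have p: "1 \<le> i" "i \<le> 2*n" and q: "1 \<le> n+1" "n+1 \<le> 2*n" using i by auto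
  note S1 = step_R(1)[OF s1 R p q] and S2 = step_R(2)[OF s1 R p q]
    and S3 = step_R(3)[OF s1 R p q] and S4 = step_R(4)[OF s1 R p q]
  have zi: "Zr n (snd st) i i (i+b)"
  proof -
    have "Zr n (snd st) i (max i (i - b)) (i+b)" using I i unfolding Invm_def Tp_def by auto
    thus ?thesis by simp
  qed
  have z1: "Zr n (snd st) (n+1) i (i+b)"
    by (rule Zr_mono[of _ _ _ i "i+b-1"]) (use I in \<open>auto simp: Invm_def\<close>)
  have keep: "Zr n (snd s1) r lo hi" if "1 \<le> r" "r \<le> 2*n" "r \<noteq> i" "r \<noteq> n+1" "Zr n (snd st) r lo hi" for r lo hi
    using S2 that by auto
  have I1: "Invd n b i (i+1) (snd s1)"
    unfolding Invd_def
  proof (intro conjI allI impI)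
    show "snd s1 \<in> carrier_mat (2*n) n" by (rule S1)
    show "Bp n b i (snd s1)"
      unfolding Bp_def
    proof (intro conjI allI impI)
      show "Zr n (snd s1) (n+1) (i+1) (i+b)" using S4[OF zi z1 refl] by simp
      show "Zr n (snd s1) (n+j') (n+1) 0" if "2 \<le> j'" "j' \<le> i" for j'
        by (rule keep) (use I i that in \<open>auto simp: Invm_def\<close>)
      show "Zr n (snd s1) (n+j') j' (max j' (i+b-1))" if "i < j'" "j' \<le> n" for j'
        by (rule keep) (use I i that in \<open>auto simp: Invm_def\<close>)
    qed
    show "Zr n (snd s1) i i (i + 1 - 1 + b)" using S3[OF zi z1] by simp
    show "Zr n (snd s1) r (i+1) (r+b)" if "i < r" "r < i+1" "r \<le> n" for r using that by simp
    show "Zr n (snd s1) r (max i (r - b)) (r+b)" if "i+1 \<le> r" "r \<le> n" for r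
      by (rule keep) (use I i that in \<open>auto simp: Invm_def Tp_def\<close>)
  qed
  define e where "e = (if i < n then Suc (min n (b + i)) else i + 1)"
  have Iend: "Invd n b i e (snd st')"
  proof (cases "i < n")
    case True
    hence s2': "rot_seq (2*n) (map (\<lambda>j. (i, j, i)) [i + 1..<Suc (min n (b + i))]) s1 st'" using s2 by simp
    have "Invd n b i (Suc (min n (b + i))) (snd st')"
      by (rule rot_seq_loop1[where I="\<lambda>j s. Invd n b i j (snd s)", OF _ s2' I1])
         (use hb i True in \<open>auto intro!: stage_d_step\<close>)
    thus ?thesis using True by (simp add: e_def)
  next
    case False
    hence "st' = s1" using s2 by (auto elim: rot_seq.cases)
    thus ?thesis using I1 False by (simp add: e_def)
  qed
  show ?thesis
    unfolding Inv_def
  proof (intro conjI)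
    show "snd st' \<in> carrier_mat (2*n) n" "Bp n b (i + 1 - 1) (snd st')" using Iend unfolding Invd_def by auto
    show "Tp n b (i+1) (snd st')"
      unfolding Tp_def
    proof (intro allI impI)
      fix r assume r: "i + 1 \<le> r" "r \<le> n"
      show "Zr n (snd st') r (max (i+1) (r - b)) (r + b)"
      proof (cases "r < e")
        case True
        hence "Zr n (snd st') r (i+1) (r+b)" using Iend r unfolding Invd_def by auto
        thus ?thesis by (rule Zr_mono) (use True r in \<open>auto simp: e_def split: if_splits\<close>)
      next
        case False
        hence "Zr n (snd st') r (max i (r - b)) (r+b)" using Iend r unfolding Invd_def by auto
        moreover have "max i (r - b) = max (i+1) (r - b)" using False r unfolding e_def by (auto split: if_splits)
        ultimately show ?thesis by simp
      qed
    qed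
  qed
qed



lemma Qseq:
  assumes "rot_seq N ops st st'"
  shows "(\<forall>x\<in>set ops. case x of (p,q,j) \<Rightarrow> 1 \<le> p \<and> p \<le> N \<and> 1 \<le> q \<and> q \<le> N) \<Longrightarrow>
    fst st \<in> carrier_mat N N \<Longrightarrow> snd st \<in> carrier_mat N m \<Longrightarrow> transpose_mat (fst st) * fst st = 1\<^sub>m N \<Longrightarrow>
    fst st' \<in> carrier_mat N N \<and> snd st' \<in> carrier_mat N m \<and> fst st' * snd st' = fst st * snd st
    \<and> transpose_mat (fst st') * fst st' = 1\<^sub>m N"
  using assms
proof (induction rule: rot_seq.induct)
  case (Nil st) thus ?case by simp
next
  case (Cons op st st' ops st'')
  obtain p q j where op: "op = (p,q,j)" by (cases op)
  have v: "1 \<le> p" "p \<le> N" "1 \<le> q" "q \<le> N" using Cons.prems(1) op by auto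
  have st: "rot_step N (p,q,j) st st'" using Cons.hyps(1) op by simp
  note Q = step_Q[OF st Cons.prems(3) Cons.prems(2) v Cons.prems(4)]
  have R: "snd st' \<in> carrier_mat N m" using step_R(1)[OF st Cons.prems(3) v] .
  have "fst st'' \<in> carrier_mat N N \<and> snd st'' \<in> carrier_mat N m \<and> fst st'' * snd st'' = fst st' * snd st'
    \<and> transpose_mat (fst st'') * fst st'' = 1\<^sub>m N"
    using Cons.IH Cons.prems(1) Q R by auto
  thus ?case using Q by simp
qed

lemma alg2_ops_valid: "1 < n \<Longrightarrow> \<forall>x\<in>set (alg2_ops n b). case x of (p,q,j) \<Rightarrow> 1 \<le> p \<and> p \<le> 2*n \<and> 1 \<le> q \<and> q \<le> 2*n"
  unfolding alg2_ops_def by (auto split: if_splits)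

lemma init_Invm:
  assumes A: "A \<in> carrier_mat n n" and band: "bandwidth_le A b" and hb: "1 \<le> b"
  shows "Invm n b 1 (snd (alg2_init n A))"
  unfolding Invm_def
proof (intro conjI allI impI)
  let ?R = "snd (alg2_init n A)"
  show "?R \<in> carrier_mat (2*n) n" by (simp add: alg2_init_def)
  show "Tp n b 1 ?R" unfolding Tp_def Zr_def
  proof (intro allI impI)
    fix r C assume r: "1 \<le> r" "r \<le> n" and C: "1 \<le> C" "C \<le> n" "C < max 1 (r - b) \<or> r + b < C"
    have "A $$ (r - 1, C - 1) = 0" by (rule band0[OF band A]) (use r C in auto)
    thus "?R $$ (r - 1, C - 1) = 0" using r C by (simp add: alg2_init_def)
  qed
  show "Zr n ?R (n+1) 1 (1+b-1)" unfolding Zr_def using hb by (auto simp: alg2_init_def)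
  show "Zr n ?R (n+j') (n+1) 0" if "2 \<le> j'" "j' \<le> 1" for j' using that by simp
  show "Zr n ?R (n+j') j' (max j' (1+b-1))" if "1 < j'" "j' \<le> n" for j'
    unfolding Zr_def using that by (auto simp: alg2_init_def)
qed

lemma alg2_zero:
  assumes A: "A \<in> carrier_mat n n" and band: "bandwidth_le A b" and hb: "1 < b" and bn: "b < n"
    and seq: "rot_seq (2*n) (alg2_ops n b) (alg2_init n A) st"
  shows "Inv n b (Suc n) (snd st)"
proof -
  define stg where "stg i = ([(n + 1, n + i, i)] @ map (\<lambda>j. (n + j, n + i, j)) [i + 1..<Suc (min n (b + i - 1))])
     @ ([(i, n + 1, i)] @ (if i < n then map (\<lambda>j. (i, j, i)) [i + 1..<Suc (min n (b + i))] else []))" for i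
  have ops: "alg2_ops n b = ([(1, n + 1, 1)] @ (if 1 < n then map (\<lambda>j. (1, j, 1)) [1 + 1..<Suc (min n (b + 1))] else []))
     @ concat (map stg [2..<Suc n])"
    using bn hb unfolding alg2_ops_def stg_def by (simp add: numeral_2_eq_2)
  obtain s1 where s1: "rot_seq (2*n) ([(1, n + 1, 1)] @ (if 1 < n then map (\<lambda>j. (1, j, 1)) [1 + 1..<Suc (min n (b + 1))] else [])) (alg2_init n A) s1"
    and s2: "rot_seq (2*n) (concat (map stg [2..<Suc n])) s1 st"
    using rot_seq_append[OF seq[unfolded ops]] by blast
  have I2: "Inv n b (1+1) (snd s1)"
    by (rule stage_cd[OF _ _ _ init_Invm[OF A band] s1]) (use hb bn in auto)
  show ?thesis
  proof (rule rot_seq_loop[where I="\<lambda>i s. Inv n b i (snd s)", OF _ s2])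
    fix i s s' assume i: "2 \<le> i" "i < Suc n" and I: "Inv n b i (snd s)" and sq: "rot_seq (2*n) (stg i) s s'"
    obtain s3 where a: "rot_seq (2*n) ([(n + 1, n + i, i)] @ map (\<lambda>j. (n + j, n + i, j)) [i + 1..<Suc (min n (b + i - 1))]) s s3"
      and c: "rot_seq (2*n) ([(i, n + 1, i)] @ (if i < n then map (\<lambda>j. (i, j, i)) [i + 1..<Suc (min n (b + i))] else [])) s3 s'"
      using rot_seq_append[OF sq[unfolded stg_def]] by blast
    have "Invm n b i (snd s3)" by (rule stage_ab[OF _ _ _ I a]) (use i hb in auto)
    from stage_cd[OF _ _ _ this c] i hb show "Inv n b (Suc i) (snd s')" by auto
  qed (use I2 bn in \<open>auto simp: numeral_2_eq_2\<close>)
qed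

lemma Inv_final:
  assumes "Inv n b (Suc n) R" and r: "n \<le> r" "r < 2*n" and c: "c < n"
  shows "R $$ (r, c) = 0"
proof -
  have B: "Bp n b n R" using assms(1) unfolding Inv_def by simp
  show ?thesis
  proof (cases "r = n")
    case True
    have "Zr n R (n+1) (n+1) (n+b)" using B unfolding Bp_def by simp
    thus ?thesis using True c unfolding Zr_def by (auto elim!: allE[of _ "Suc c"])
  next
    case False
    have j: "2 \<le> r + 1 - n" "r + 1 - n \<le> n" using False r by auto
    have "Zr n R (n + (r + 1 - n)) (n+1) 0" using B j unfolding Bp_def by blast
    thus ?thesis using r c unfolding Zr_def by (auto elim!: allE[of _ "Suc c"])
  qed
qed



lemma pick_ivl: "a + j < e \<Longrightarrow> pick {a..<e} j = a + j"
proof (induction j)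
  case 0 thus ?case by (auto intro!: Least_equality)
next
  case (Suc j)
  thus ?case by (auto intro!: Least_equality)
qed

lemma submatrix_ul: "M \<in> carrier_mat n n \<Longrightarrow> k \<le> n \<Longrightarrow>
  submatrix M {..<k} {k..<n} = mat k (n-k) (\<lambda>(i,j). M $$ (i,k+j))"
proof -
  assume M: "M \<in> carrier_mat n n" and k: "k \<le> n"
  have c1: "card {i. i < dim_row M \<and> i \<in> {..<k}} = k"
  proof -
    have "{i. i < dim_row M \<and> i \<in> {..<k}} = {..<k}" using M k by auto
    thus ?thesis by simp
  qed
  have c2: "card {i. i < dim_col M \<and> i \<in> {k..<n}} = n - k"
  proof -
    have "{i. i < dim_col M \<and> i \<in> {k..<n}} = {k..<n}" using M k by auto
    thus ?thesis by simp
  qed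
  show ?thesis unfolding submatrix_def c1 c2
    using pick_ivl[of 0 _ k] pick_ivl[of k _ n] by (intro eq_matI) (auto simp: lessThan_atLeast0)
qed

lemma submatrix_ll: "M \<in> carrier_mat n n \<Longrightarrow> k \<le> n \<Longrightarrow>
  submatrix M {k..<n} {..<k} = mat (n-k) k (\<lambda>(i,j). M $$ (k+i,j))"
proof -
  assume M: "M \<in> carrier_mat n n" and k: "k \<le> n"
  have c1: "card {i. i < dim_col M \<and> i \<in> {..<k}} = k"
  proof -
    have "{i. i < dim_col M \<and> i \<in> {..<k}} = {..<k}" using M k by auto
    thus ?thesis by simp
  qed
  have c2: "card {i. i < dim_row M \<and> i \<in> {k..<n}} = n - k"
  proof -
    have "{i. i < dim_row M \<and> i \<in> {k..<n}} = {k..<n}" using M k by auto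
    thus ?thesis by simp
  qed
  show ?thesis unfolding submatrix_def c1 c2
    using pick_ivl[of 0 _ k] pick_ivl[of k _ n] by (intro eq_matI) (auto simp: lessThan_atLeast0)
qed



theorem theorem4p4:
  fixes A Q :: "real mat" and n b :: nat
  assumes "A \<in> carrier_mat n n"
    and "transpose_mat A = A"
    and "bandwidth_le A b"
    and "1 < b" and "b < n"
    and "alg2_Q n b A Q"
  shows "\<forall>k. 1 \<le> k \<and> k < n \<longrightarrow>
    (let Q1 = mat n n (\<lambda>(i, j). Q $$ (i, j));
         Q2 = mat n n (\<lambda>(i, j). Q $$ (n + i, j));
         M = Q1 * transpose_mat Q2
     in vec_space.rank k (submatrix M {..<k} {k..<n}) \<le> 2 * b
      \<and> vec_space.rank (n - k) (submatrix M {k..<n} {..<k}) \<le> 2 * b)"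
proof -
  note A = assms(1) and As = assms(2) and band = assms(3) and hb = assms(4) and bn = assms(5)
  from assms(6) obtain R where seq: "rot_seq (2*n) (alg2_ops n b) (alg2_init n A) (Q,R)"
    unfolding alg2_Q_def by auto
  define R0 where "R0 = snd (alg2_init n A)"
  have R0c: "R0 \<in> carrier_mat (2*n) n" unfolding R0_def alg2_init_def by simp
  have init1: "fst (alg2_init n A) = 1\<^sub>m (2*n)" unfolding alg2_init_def by simp
  have QS: "Q \<in> carrier_mat (2*n) (2*n) \<and> R \<in> carrier_mat (2*n) n \<and> Q * R = 1\<^sub>m (2*n) * R0
    \<and> transpose_mat Q * Q = 1\<^sub>m (2*n)"
    using Qseq[OF seq alg2_ops_valid[of n b], of n] bn hb R0c unfolding R0_def init1 by auto
  hence Qc: "Q \<in> carrier_mat (2*n) (2*n)" and Rc: "R \<in> carrier_mat (2*n) n"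
    and QR: "Q * R = R0" and orth: "transpose_mat Q * Q = 1\<^sub>m (2*n)" using R0c by auto
  have zero: "R $$ (r, c) = 0" if "n \<le> r" "r < 2*n" "c < n" for r c
    using Inv_final[OF alg2_zero[OF A band hb bn seq]] that by simp
  define Q1 where "Q1 = mat n n (\<lambda>(i, j). Q $$ (i, j))"
  define Q2 where "Q2 = mat n n (\<lambda>(i, j). Q $$ (n + i, j))"
  define R1 where "R1 = mat n n (\<lambda>(i, j). R $$ (i, j))"
  have Q1c: "Q1 \<in> carrier_mat n n" and Q2c: "Q2 \<in> carrier_mat n n" and R1c: "R1 \<in> carrier_mat n n"
    unfolding Q1_def Q2_def R1_def by auto
  have QRs: "(Q * R) $$ (i,j) = (\<Sum>l<n. Q $$ (i,l) * R $$ (l,j))" if "i < 2*n" "j < n" for i j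
  proof -
    have "(Q * R) $$ (i,j) = (\<Sum>l<n+n. Q $$ (i,l) * R $$ (l,j))"
      using mult_entry[OF Qc Rc that] by (simp add: mult_2)
    also have "\<dots> = (\<Sum>l<n. Q $$ (i,l) * R $$ (l,j)) + (\<Sum>l<n. Q $$ (i,n+l) * R $$ (n+l,j))"
      by (rule sum_split)
    also have "(\<Sum>l<n. Q $$ (i,n+l) * R $$ (n+l,j)) = 0"
      by (intro sum.neutral ballI) (use zero that in auto)
    finally show ?thesis by simp
  qed
  have F1: "Q1 * R1 = A"
  proof (rule eq_matI)
    fix i j assume "i < dim_row A" "j < dim_col A"
    hence ij: "i < n" "j < n" using A by auto
    have "(Q1 * R1) $$ (i,j) = (\<Sum>l<n. Q $$ (i,l) * R $$ (l,j))"
      using mult_entry[OF Q1c R1c ij] ij by (simp del: index_mult_mat add: Q1_def R1_def)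
    also have "\<dots> = (Q * R) $$ (i,j)" using QRs ij by simp
    also have "\<dots> = A $$ (i,j)" unfolding QR R0_def alg2_init_def using ij by simp
    finally show "(Q1 * R1) $$ (i,j) = A $$ (i,j)" .
  qed (use A Q1c R1c in auto)
  have F2: "Q2 * R1 = 1\<^sub>m n"
  proof (rule eq_matI)
    fix i j assume "i < dim_row (1\<^sub>m n :: real mat)" "j < dim_col (1\<^sub>m n :: real mat)"
    hence ij: "i < n" "j < n" by auto
    have "(Q2 * R1) $$ (i,j) = (\<Sum>l<n. Q $$ (n+i,l) * R $$ (l,j))"
      using mult_entry[OF Q2c R1c ij] ij by (simp del: index_mult_mat add: Q2_def R1_def)
    also have "\<dots> = (Q * R) $$ (n+i,j)" using QRs ij by simp
    also have "\<dots> = 1\<^sub>m n $$ (i,j)" unfolding QR R0_def alg2_init_def using ij by simp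
    finally show "(Q2 * R1) $$ (i,j) = 1\<^sub>m n $$ (i,j)" .
  qed (use Q2c R1c in auto)
  have F3: "transpose_mat Q1 * Q1 + transpose_mat Q2 * Q2 = 1\<^sub>m n"
  proof (rule eq_matI)
    fix i j assume "i < dim_row (1\<^sub>m n :: real mat)" "j < dim_col (1\<^sub>m n :: real mat)"
    hence ij: "i < n" "j < n" by auto
    have "(transpose_mat Q1 * Q1 + transpose_mat Q2 * Q2) $$ (i,j) = (transpose_mat Q1 * Q1) $$ (i,j) + (transpose_mat Q2 * Q2) $$ (i,j)"
      using ij Q1c Q2c by simp
    also have "(transpose_mat Q1 * Q1) $$ (i,j) = (\<Sum>l<n. Q $$ (l,i) * Q $$ (l,j))"
      using mult_entry[OF _ Q1c ij, of "transpose_mat Q1"] ij Q1c by (simp del: index_mult_mat add: Q1_def)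
    also have "(transpose_mat Q2 * Q2) $$ (i,j) = (\<Sum>l<n. Q $$ (n+l,i) * Q $$ (n+l,j))"
      using mult_entry[OF _ Q2c ij, of "transpose_mat Q2"] ij Q2c by (simp del: index_mult_mat add: Q2_def)
    also have "(\<Sum>l<n. Q $$ (l,i) * Q $$ (l,j)) + (\<Sum>l<n. Q $$ (n+l,i) * Q $$ (n+l,j))
        = (\<Sum>l<n+n. Q $$ (l,i) * Q $$ (l,j))" by (rule sum_split[symmetric])
    also have "\<dots> = (transpose_mat Q * Q) $$ (i,j)"
      using mult_entry[OF _ Qc, of "transpose_mat Q" "2*n" i j] ij Qc by (simp del: index_mult_mat add: mult_2)
    also have "\<dots> = 1\<^sub>m n $$ (i,j)" unfolding orth using ij by simp
    finally show "(transpose_mat Q1 * Q1 + transpose_mat Q2 * Q2) $$ (i,j) = 1\<^sub>m n $$ (i,j)" .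
  qed (use Q1c Q2c in auto)
  have Q1T: "transpose_mat Q1 \<in> carrier_mat n n" and Q2T: "transpose_mat Q2 \<in> carrier_mat n n"
    and R1T: "transpose_mat R1 \<in> carrier_mat n n" using Q1c Q2c R1c by auto
  have R1Q2: "R1 * Q2 = 1\<^sub>m n" by (rule mat_mult_left_right_inverse[OF Q2c R1c F2])
  have Q1e: "Q1 = A * Q2"
  proof -
    have "Q1 = Q1 * (R1 * Q2)" unfolding R1Q2 using Q1c by simp
    also have "\<dots> = (Q1 * R1) * Q2" using Q1c R1c Q2c by simp
    finally show ?thesis unfolding F1 .
  qed
  define P where "P = Q2 * transpose_mat Q2"
  define M where "M = Q1 * transpose_mat Q2"
  define H where "H = A * A + 1\<^sub>m n"
  have Pc: "P \<in> carrier_mat n n" and Mc: "M \<in> carrier_mat n n" and Hc: "H \<in> carrier_mat n n"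
    unfolding P_def M_def H_def using Q1c Q2c A by auto
  have AAc: "A * A \<in> carrier_mat n n" using A by auto
  have e2: "M = A * P" unfolding M_def P_def Q1e by (rule assoc_mult_mat[OF A Q2c Q2T])
  have "transpose_mat Q1 * Q1 = transpose_mat Q2 * ((A * A) * Q2)"
    unfolding Q1e using A Q2c Q2T
    by (simp add: transpose_mult[OF A Q2c] As assoc_mult_mat[OF Q2T A, of "A*Q2" n])
  hence "transpose_mat Q2 * ((A * A) * Q2) + transpose_mat Q2 * Q2 = 1\<^sub>m n" using F3 by simp
  hence G: "transpose_mat Q2 * (H * Q2) = 1\<^sub>m n" unfolding H_def using A Q2c Q2T AAc
    by (simp add: add_mult_distrib_mat[OF AAc _ Q2c] mult_add_distrib_mat[OF Q2T, of "A*(A*Q2)" n Q2])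
  have RQT: "transpose_mat R1 * transpose_mat Q2 = 1\<^sub>m n"
    using transpose_mult[OF Q2c R1c] F2 by simp
  have HQ2: "H * Q2 = transpose_mat R1"
  proof -
    have "H * Q2 = (transpose_mat R1 * transpose_mat Q2) * (H * Q2)" unfolding RQT using Hc Q2c by simp
    also have "\<dots> = transpose_mat R1 * (transpose_mat Q2 * (H * Q2))"
      by (rule assoc_mult_mat[OF R1T Q2T]) (use Hc Q2c in auto)
    also have "\<dots> = transpose_mat R1" unfolding G using R1T by simp
    finally show ?thesis .
  qed
  have HP: "H * P = 1\<^sub>m n"
  proof -
    have "H * P = (H * Q2) * transpose_mat Q2" unfolding P_def by (rule assoc_mult_mat[symmetric, OF Hc Q2c Q2T])
    thus ?thesis unfolding HQ2 RQT .
  qed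
  have e1: "A * M + P = 1\<^sub>m n"
  proof -
    have "A * M + P = (A * A) * P + 1\<^sub>m n * P" unfolding e2 using A Pc by simp
    also have "\<dots> = H * P" unfolding H_def using AAc Pc by (simp add: add_mult_distrib_mat[OF AAc _ Pc])
    finally show ?thesis unfolding HP .
  qed
  have main: "\<forall>k. 1 \<le> k \<and> k < n \<longrightarrow>
      vec_space.rank k (submatrix M {..<k} {k..<n}) \<le> 2 * b
    \<and> vec_space.rank (n - k) (submatrix M {k..<n} {..<k}) \<le> 2 * b"
  proof (intro allI impI)
    fix k assume k: "1 \<le> k \<and> k < n"
    hence kn: "k \<le> n" by simp
    show "vec_space.rank k (submatrix M {..<k} {k..<n}) \<le> 2 * b
      \<and> vec_space.rank (n - k) (submatrix M {k..<n} {..<k}) \<le> 2 * b"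
      unfolding submatrix_ul[OF Mc kn] submatrix_ll[OF Mc kn]
      using upper_block[OF A Mc Pc As band e1 e2 kn] lower_block[OF A Mc Pc As band e1 e2 kn] by simp
  qed
  thus ?thesis unfolding Let_def M_def Q1_def Q2_def .
qed

end
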